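(* Let $n\ge5$, $x\in\mathcal{H}_n$ and $p_0<p_1<\dots<p_{n-4}$. Then any two chain covers for $x$ are connected to each other in $\tilde{\mathbb{H}}_1(x,p)$, i.e. the corresponding vertices of the tropical curve $\tilde{\mathbb{H}}_1(x,p)$ can be joined by a sequence of edges of $\tilde{\mathbb{H}}_1(x,p)$.
   Context: $\mathcal{H}_n:=\{x\in\mathbb{Z}^n:\sum_i x_i=0\}\setminus\{0\}$. $\tilde{\mathbb{H}}_1(x,p)$ is the one-dimensional marked tropical Hurwitz cycle, $\tilde{\mathbb{H}}_1(x,p)=\prod_{i=0}^{n-4}(\Psi_i\cdot\mathrm{ev}_i^*(p_i))\cdot\mathcal{M}_{0,n-3}(\mathbb{R},x)$, where $\mathcal{M}_{0,m}(\mathbb{R},x)=\mathcal{M}_{0,n+m}\times\mathbb{R}$ is the space of tropical stable maps of rational $n$-marked curves with $m$ additional contracted leaves $l_0,\dots,l_{m-1}$ to $\mathbb{R}$ with slopes $x_i$ on leaf $i$, $\mathrm{ev}_i$ is evaluation at $l_i$, $\Psi_i$ is the Psi class of $l_i$ (curves where $l_i$ sits at a vertex of valence $\ge4$) times $\mathbb{R}$, and $\mathrm{ev}_i^*(p_i)$ is the pull-back of $t\mapsto\max\{t,p_i\}$. Orientation/weights: for an $n$-marked rational tropical curve, leaf $i$ has weight $|x_i|$ and points away from its vertex iff $x_i>0$; a bounded edge inducing the split $I\mid I^c$ has weight $|\sum_{i\in I}x_i|$ and points towards $I$ iff $\sum_{i\in I}x_i>0$. A vertex type cover is a combinatorial type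 of an $n$-marked rational curve with exactly one four-valent vertex and all other vertices trivalent, together with a bijective labeling of its $n-3$ vertices by $p_0,\dots,p_{n-4}$, such that every bounded edge has nonzero weight and is oriented from the vertex with the smaller label to the vertex with the larger label; these are exactly the vertices of $\tilde{\mathbb{H}}_1(x,p)$ (the $p_j$ determine all edge lengths). A chain cover is a vertex type cover in which the vertices carrying $p_i$ and $p_j$ are adjacent iff $|i-j|=1$. *)

theory Defs
  imports Complex_Main
begin

text \<open>A type is a pair (E, lf): E is the set of bounded edges (two-element sets of
  internal vertices, internal vertices are natural numbers), and lf is a list of
  length n, leaf i being attached to the internal vertex lf ! i.
  For vertex type covers the internal vertices are 0..n-4 and vertex j carries p_j.
  For the one-dimensional cells of the Hurwitz cycle the internal vertices are
  0..n-3, where n-3 is the (unique) vertex not carrying a point condition.\<close>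

type_synonym ctype = "nat set set \<times> nat list"

definition adjrel :: "nat set set \<Rightarrow> (nat \<times> nat) set" where
  "adjrel E = {(a, b). {a, b} \<in> E}"

definition is_tree :: "nat set \<Rightarrow> nat set set \<Rightarrow> bool" where
  "is_tree V E \<longleftrightarrow> finite V \<and> V \<noteq> {} \<and>
     (\<forall>e\<in>E. \<exists>a b. e = {a, b} \<and> a \<noteq> b \<and> a \<in> V \<and> b \<in> V) \<and>
     (\<forall>a\<in>V. \<forall>b\<in>V. (a, b) \<in> (adjrel E)\<^sup>*) \<and>
     card E + 1 = card V"

definition val :: "ctype \<Rightarrow> nat \<Rightarrow> nat" where
  "val T u = card {e \<in> fst T. u \<in> e} + card {i. i < length (snd T) \<and> snd T ! i = u}"

definition ntype :: "nat \<Rightarrow> nat set \<Rightarrow> ctype \<Rightarrow> bool" where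
  "ntype n V T \<longleftrightarrow> is_tree V (fst T) \<and> length (snd T) = n \<and>
     (\<forall>i<n. snd T ! i \<in> V) \<and> (\<forall>u\<in>V. 3 \<le> val T u)"

text \<open>The leaves on the b-side of the bounded edge {a,b}, and the signed sum of
  the x_i over them; the edge has weight |flow| and points towards b iff flow > 0.\<close>
definition side :: "ctype \<Rightarrow> nat \<Rightarrow> nat \<Rightarrow> nat set" where
  "side T a b = {i. i < length (snd T) \<and> (b, snd T ! i) \<in> (adjrel (fst T - {{a, b}}))\<^sup>*}"

definition flow :: "(nat \<Rightarrow> int) \<Rightarrow> ctype \<Rightarrow> nat \<Rightarrow> nat \<Rightarrow> int" where
  "flow x T a b = (\<Sum>i\<in>side T a b. x i)"

definition in_Hn :: "nat \<Rightarrow> (nat \<Rightarrow> int) \<Rightarrow> bool" where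
  "in_Hn n x \<longleftrightarrow> (\<Sum>i<n. x i) = 0 \<and> (\<exists>i<n. x i \<noteq> 0)"

definition vertex_type_cover :: "nat \<Rightarrow> (nat \<Rightarrow> int) \<Rightarrow> ctype \<Rightarrow> bool" where
  "vertex_type_cover n x T \<longleftrightarrow> ntype n {..<n-3} T \<and>
     (\<exists>u<n-3. val T u = 4 \<and> (\<forall>w<n-3. w \<noteq> u \<longrightarrow> val T w = 3)) \<and>
     (\<forall>a b. {a, b} \<in> fst T \<and> a < b \<longrightarrow> flow x T a b > 0)"

definition chain_cover :: "nat \<Rightarrow> (nat \<Rightarrow> int) \<Rightarrow> ctype \<Rightarrow> bool" where
  "chain_cover n x T \<longleftrightarrow> vertex_type_cover n x T \<and>
     (\<forall>i<n-3. \<forall>j<n-3. {i, j} \<in> fst T \<longleftrightarrow> (i + 1 = j \<or> j + 1 = i))"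

text \<open>Bounded one-dimensional cells (edges) of the marked Hurwitz cycle: trivalent
  n-marked types on internal vertices 0..n-3, vertex j < n-3 carrying p_j and the vertex
  v = n-3 free. Every bounded edge has nonzero weight, edges between marked vertices point
  towards the larger p-value, and the position t of v ranges over the nonempty bounded
  interval given by  p_a < t  for edges a -> v  and  t < p_b  for edges v -> b.\<close>
definition in_nb :: "(nat \<Rightarrow> int) \<Rightarrow> nat \<Rightarrow> ctype \<Rightarrow> nat set" where
  "in_nb x n T = {a. {a, n-3} \<in> fst T \<and> flow x T a (n-3) > 0}"

definition out_nb :: "(nat \<Rightarrow> int) \<Rightarrow> nat \<Rightarrow> ctype \<Rightarrow> nat set" where
  "out_nb x n T = {b. {b, n-3} \<in> fst T \<and> flow x T (n-3) b > 0}"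

definition edge_cell :: "nat \<Rightarrow> (nat \<Rightarrow> int) \<Rightarrow> (nat \<Rightarrow> real) \<Rightarrow> ctype \<Rightarrow> bool" where
  "edge_cell n x p T \<longleftrightarrow> ntype n {..n-3} T \<and> (\<forall>u\<le>n-3. val T u = 3) \<and>
     (\<forall>a b. {a, b} \<in> fst T \<longrightarrow> flow x T a b \<noteq> 0) \<and>
     (\<forall>a b. {a, b} \<in> fst T \<and> a < n-3 \<and> b < n-3 \<and> p a < p b \<longrightarrow> flow x T a b > 0) \<and>
     in_nb x n T \<noteq> {} \<and> out_nb x n T \<noteq> {} \<and>
     (\<forall>a\<in>in_nb x n T. \<forall>b\<in>out_nb x n T. p a < p b)"

definition contract :: "nat \<Rightarrow> ctype \<Rightarrow> nat \<Rightarrow> ctype" where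
  "contract n T a = (let f = (\<lambda>u. if u = n-3 then a else u) in
     ((\<lambda>e. f ` e) ` (fst T - {{a, n-3}}), map f (snd T)))"

text \<open>Two vertices of the Hurwitz cycle joined by an edge: the two endpoints of a
  bounded cell, obtained by moving v down to the largest p_a (a -> v) or up to the
  smallest p_b (v -> b).\<close>
definition hur_edge :: "nat \<Rightarrow> (nat \<Rightarrow> int) \<Rightarrow> (nat \<Rightarrow> real) \<Rightarrow> (ctype \<times> ctype) set" where
  "hur_edge n x p = {(C1, C2). \<exists>T a b. edge_cell n x p T \<and>
     a \<in> in_nb x n T \<and> (\<forall>a'\<in>in_nb x n T. p a' \<le> p a) \<and>
     b \<in> out_nb x n T \<and> (\<forall>b'\<in>out_nb x n T. p b \<le> p b') \<and>
     C1 = contract n T a \<and> C2 = contract n T b}"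

end

theory Submission
  imports Defs
begin


definition PEw :: "(nat \<Rightarrow> nat) \<Rightarrow> nat \<Rightarrow> nat set set" where
  "PEw w N = (\<lambda>i. {w i, w (Suc i)}) ` {..<N}"

lemma PEw_mem:
  "{a, b} \<in> PEw w N \<longleftrightarrow> (\<exists>i<N. (a = w i \<and> b = w (Suc i)) \<or> (a = w (Suc i) \<and> b = w i))"
  unfolding PEw_def by (auto simp: doubleton_eq_iff)

lemma reach_up:
  assumes inj: "inj_on w {..N}" and i: "i < N"
  shows "(w (Suc i), u) \<in> (adjrel (PEw w N - {{w i, w (Suc i)}}))\<^sup>* \<longleftrightarrow>
         (\<exists>j. Suc i \<le> j \<and> j \<le> N \<and> u = w j)"
proof
  assume "(w (Suc i), u) \<in> (adjrel (PEw w N - {{w i, w (Suc i)}}))\<^sup>*"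
  then show "\<exists>j. Suc i \<le> j \<and> j \<le> N \<and> u = w j"
  proof (induction rule: rtrancl_induct)
    case base then show ?case using i by auto
  next
    case (step y z)
    from step.IH obtain j where j: "Suc i \<le> j" "j \<le> N" "y = w j" by blast
    from step.hyps(2) have yz: "{y,z} \<in> PEw w N" "{y,z} \<noteq> {w i, w (Suc i)}"
      by (auto simp: adjrel_def)
    then obtain l where l: "l < N" "(y = w l \<and> z = w (Suc l)) \<or> (y = w (Suc l) \<and> z = w l)"
      by (auto simp: PEw_mem)
    show ?case
    proof (cases "y = w l \<and> z = w (Suc l)")
      case True
      then have "j = l" using inj j l by (auto dest: inj_onD)
      then show ?thesis using True l j by (intro exI[of _ "Suc l"]) auto
    next
      case False
      then have yz2: "y = w (Suc l)" "z = w l" using l by auto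
      then have "j = Suc l" using inj j l by (auto dest: inj_onD)
      moreover have "l \<noteq> i" using yz2 yz(2) by auto
      ultimately show ?thesis using yz2 l j by (intro exI[of _ l]) auto
    qed
  qed
next
  assume "\<exists>j. Suc i \<le> j \<and> j \<le> N \<and> u = w j"
  then obtain j where j: "Suc i \<le> j" "j \<le> N" "u = w j" by blast
  have "(w (Suc i), w j) \<in> (adjrel (PEw w N - {{w i, w (Suc i)}}))\<^sup>*"
    if "Suc i \<le> j" "j \<le> N" for j
    using that
  proof (induction j)
    case 0 then show ?case by simp
  next
    case (Suc j)
    show ?case
    proof (cases "Suc i = Suc j")
      case True then show ?thesis by simp
    next
      case False
      then have ij: "Suc i \<le> j" "j < N" using Suc.prems by auto
      have e: "{w j, w (Suc j)} \<in> PEw w N" using ij by (auto simp: PEw_def)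
      have ne: "{w j, w (Suc j)} \<noteq> {w i, w (Suc i)}"
      proof
        assume "{w j, w (Suc j)} = {w i, w (Suc i)}"
        then have "(w j = w i \<and> w (Suc j) = w (Suc i)) \<or> (w j = w (Suc i) \<and> w (Suc j) = w i)"
          by (auto simp: doubleton_eq_iff)
        then have "(j = i) \<or> (j = Suc i \<and> Suc j = i)"
          using inj ij i by (auto dest: inj_onD)
        then show False using ij by auto
      qed
      have "(w j, w (Suc j)) \<in> adjrel (PEw w N - {{w i, w (Suc i)}})"
        using e ne by (auto simp: adjrel_def)
      moreover have "(w (Suc i), w j) \<in> (adjrel (PEw w N - {{w i, w (Suc i)}}))\<^sup>*"
        using Suc.IH ij by simp
      ultimately show ?thesis by (meson rtrancl.rtrancl_into_rtrancl)
    qed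
  qed
  then show "(w (Suc i), u) \<in> (adjrel (PEw w N - {{w i, w (Suc i)}}))\<^sup>*" using j by simp
qed

lemma reach_down:
  assumes inj: "inj_on w {..N}" and i: "i < N"
  shows "(w i, u) \<in> (adjrel (PEw w N - {{w i, w (Suc i)}}))\<^sup>* \<longleftrightarrow>
         (\<exists>j. j \<le> i \<and> u = w j)"
proof
  assume "(w i, u) \<in> (adjrel (PEw w N - {{w i, w (Suc i)}}))\<^sup>*"
  then show "\<exists>j. j \<le> i \<and> u = w j"
  proof (induction rule: rtrancl_induct)
    case base then show ?case by auto
  next
    case (step y z)
    from step.IH obtain j where j: "j \<le> i" "y = w j" by blast
    from step.hyps(2) have yz: "{y,z} \<in> PEw w N" "{y,z} \<noteq> {w i, w (Suc i)}"
      by (auto simp: adjrel_def)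
    then obtain l where l: "l < N" "(y = w l \<and> z = w (Suc l)) \<or> (y = w (Suc l) \<and> z = w l)"
      by (auto simp: PEw_mem)
    show ?case
    proof (cases "y = w l \<and> z = w (Suc l)")
      case True
      then have "j = l" using inj j l i by (auto dest: inj_onD)
      moreover have "l \<noteq> i" using True yz(2) by auto
      ultimately show ?thesis using True l j by (intro exI[of _ "Suc l"]) auto
    next
      case False
      then have yz2: "y = w (Suc l)" "z = w l" using l by auto
      then have "j = Suc l" using inj j l i by (auto dest: inj_onD)
      then show ?thesis using yz2 l j by (intro exI[of _ l]) auto
    qed
  qed
next
  assume "\<exists>j. j \<le> i \<and> u = w j"
  then obtain j where j: "j \<le> i" "u = w j" by blast
  have "(w i, w (i - d)) \<in> (adjrel (PEw w N - {{w i, w (Suc i)}}))\<^sup>*"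
    if "d \<le> i" for d
    using that
  proof (induction d)
    case 0 then show ?case by simp
  next
    case (Suc d)
    define j where "j = i - Suc d"
    have ij: "j < i" "Suc j = i - d" using Suc.prems by (auto simp: j_def)
    have e: "{w j, w (Suc j)} \<in> PEw w N" using ij i by (auto simp: PEw_def)
    have ne: "{w j, w (Suc j)} \<noteq> {w i, w (Suc i)}"
    proof
      assume "{w j, w (Suc j)} = {w i, w (Suc i)}"
      then have "(w j = w i \<and> w (Suc j) = w (Suc i)) \<or> (w j = w (Suc i) \<and> w (Suc j) = w i)"
        by (auto simp: doubleton_eq_iff)
      then have "(j = i) \<or> (j = Suc i \<and> Suc j = i)"
        using inj ij i by (auto dest: inj_onD)
      then show False using ij by auto
    qed
    have "(w (Suc j), w j) \<in> adjrel (PEw w N - {{w i, w (Suc i)}})"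
      using e ne by (auto simp: adjrel_def insert_commute)
    then show ?case using Suc ij by (metis j_def rtrancl.rtrancl_into_rtrancl Suc_leD)
  qed
  from this[of "i - j"] show "(w i, u) \<in> (adjrel (PEw w N - {{w i, w (Suc i)}}))\<^sup>*"
    using j by simp
qed



lemma side_path:
  assumes inj: "inj_on w {..N}" and i: "i < N"
    and q: "\<forall>l<length L. q l \<le> N \<and> L!l = w (q l)"
  shows "side (PEw w N, L) (w i) (w (Suc i)) = {l. l < length L \<and> Suc i \<le> q l}"
    and "side (PEw w N, L) (w (Suc i)) (w i) = {l. l < length L \<and> q l \<le> i}"
proof -
  show "side (PEw w N, L) (w i) (w (Suc i)) = {l. l < length L \<and> Suc i \<le> q l}"
  proof -
    have "(w (Suc i), L!l) \<in> (adjrel (PEw w N - {{w i, w (Suc i)}}))\<^sup>* \<longleftrightarrow> Suc i \<le> q l"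
      if "l < length L" for l
    proof -
      have "(\<exists>j. Suc i \<le> j \<and> j \<le> N \<and> L!l = w j) \<longleftrightarrow> Suc i \<le> q l"
        using q that inj by (auto dest: inj_onD)
      then show ?thesis using reach_up[OF inj i] by simp
    qed
    then show ?thesis unfolding side_def by auto
  qed
  show "side (PEw w N, L) (w (Suc i)) (w i) = {l. l < length L \<and> q l \<le> i}"
  proof -
    have "(w i, L!l) \<in> (adjrel (PEw w N - {{w (Suc i), w i}}))\<^sup>* \<longleftrightarrow> q l \<le> i"
      if "l < length L" for l
    proof -
      have "(\<exists>j. j \<le> i \<and> L!l = w j) \<longleftrightarrow> q l \<le> i"
        using q that inj i by (auto dest: inj_onD)
      then show ?thesis using reach_down[OF inj i] by (simp add: insert_commute)
    qed
    then show ?thesis unfolding side_def by auto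
  qed
qed

lemma flow_path:
  assumes inj: "inj_on w {..N}" and i: "i < N"
    and q: "\<forall>l<length L. q l \<le> N \<and> L!l = w (q l)"
    and len: "length L = n" and x0: "(\<Sum>l<n. x l) = 0"
  shows "flow x (PEw w N, L) (w i) (w (Suc i)) = (\<Sum>l\<in>{l. l < n \<and> Suc i \<le> q l}. x l)"
    and "flow x (PEw w N, L) (w (Suc i)) (w i) = - (\<Sum>l\<in>{l. l < n \<and> Suc i \<le> q l}. x l)"
proof -
  show "flow x (PEw w N, L) (w i) (w (Suc i)) = (\<Sum>l\<in>{l. l < n \<and> Suc i \<le> q l}. x l)"
    unfolding flow_def side_path(1)[OF inj i q] len by simp
  have A: "{l. l < n \<and> q l \<le> i} = {..<n} - {l. l < n \<and> Suc i \<le> q l}" by auto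
  have "(\<Sum>l\<in>{l. l < n \<and> q l \<le> i}. x l) = (\<Sum>l<n. x l) - (\<Sum>l\<in>{l. l < n \<and> Suc i \<le> q l}. x l)"
    unfolding A by (rule sum_diff) auto
  then show "flow x (PEw w N, L) (w (Suc i)) (w i) = - (\<Sum>l\<in>{l. l < n \<and> Suc i \<le> q l}. x l)"
    unfolding flow_def side_path(2)[OF inj i q] len using x0 by simp
qed



lemma edge_inj:
  assumes inj: "inj_on w {..N}"
  shows "inj_on (\<lambda>i. {w i, w (Suc i)}) {..<N}"
proof (rule inj_onI)
  fix i j assume ij: "i \<in> {..<N}" "j \<in> {..<N}" "{w i, w (Suc i)} = {w j, w (Suc j)}"
  then have "(w i = w j \<and> w (Suc i) = w (Suc j)) \<or> (w i = w (Suc j) \<and> w (Suc i) = w j)"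
    by (auto simp: doubleton_eq_iff)
  then have "i = j \<or> (i = Suc j \<and> Suc i = j)" using inj ij by (auto dest: inj_onD)
  then show "i = j" by auto
qed

lemma tree_path:
  assumes inj: "inj_on w {..N}"
  shows "is_tree (w ` {..N}) (PEw w N)"
proof -
  have ne: "\<forall>e\<in>PEw w N. \<exists>a b. e = {a, b} \<and> a \<noteq> b \<and> a \<in> w ` {..N} \<and> b \<in> w ` {..N}"
  proof
    fix e assume "e \<in> PEw w N"
    then obtain i where i: "i < N" "e = {w i, w (Suc i)}" by (auto simp: PEw_def)
    have "w i \<noteq> w (Suc i)" using inj i by (metis atMost_iff inj_onD less_imp_le_nat n_not_Suc_n Suc_leI)
    then show "\<exists>a b. e = {a, b} \<and> a \<noteq> b \<and> a \<in> w ` {..N} \<and> b \<in> w ` {..N}"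
      using i by (intro exI[of _ "w i"] exI[of _ "w (Suc i)"]) auto
  qed
  have r: "(w 0, w j) \<in> (adjrel (PEw w N))\<^sup>* \<and> (w j, w 0) \<in> (adjrel (PEw w N))\<^sup>*"
    if "j \<le> N" for j
    using that
  proof (induction j)
    case 0 then show ?case by simp
  next
    case (Suc j)
    have e: "{w j, w (Suc j)} \<in> PEw w N" using Suc.prems by (auto simp: PEw_def)
    then have a1: "(w j, w (Suc j)) \<in> adjrel (PEw w N)" and a2: "(w (Suc j), w j) \<in> adjrel (PEw w N)"
      by (auto simp: adjrel_def insert_commute)
    have "(w 0, w j) \<in> (adjrel (PEw w N))\<^sup>* \<and> (w j, w 0) \<in> (adjrel (PEw w N))\<^sup>*"
      using Suc by simp
    then show ?case using a1 a2
      by (meson converse_rtrancl_into_rtrancl rtrancl.rtrancl_into_rtrancl)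
  qed
  have conn: "\<forall>a\<in>w ` {..N}. \<forall>b\<in>w ` {..N}. (a, b) \<in> (adjrel (PEw w N))\<^sup>*"
  proof (intro ballI)
    fix a b assume "a \<in> w ` {..N}" "b \<in> w ` {..N}"
    then obtain i j where "i \<le> N" "j \<le> N" "a = w i" "b = w j" by auto
    then show "(a, b) \<in> (adjrel (PEw w N))\<^sup>*" using r by (meson rtrancl_trans)
  qed
  have c1: "card (PEw w N) = N"
    unfolding PEw_def using card_image[OF edge_inj[OF inj]] by simp
  have c2: "card (w ` {..N}) = Suc N" using card_image[OF inj] by simp
  show ?thesis unfolding is_tree_def using ne conn c1 c2 by auto
qed

lemma ecount_path:
  assumes inj: "inj_on w {..N}" and j: "j \<le> N"
  shows "card {e \<in> PEw w N. w j \<in> e} = (if 0 < j then 1 else 0) + (if j < N then 1 else 0)"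
proof -
  have eq: "{e \<in> PEw w N. w j \<in> e} = (\<lambda>i. {w i, w (Suc i)}) ` {i. i < N \<and> (i = j \<or> Suc i = j)}"
  proof -
    have "w j \<in> {w i, w (Suc i)} \<longleftrightarrow> (i = j \<or> Suc i = j)" if "i < N" for i
      using inj that j by (auto dest: inj_onD)
    then show ?thesis unfolding PEw_def by auto
  qed
  have "card {e \<in> PEw w N. w j \<in> e} = card {i. i < N \<and> (i = j \<or> Suc i = j)}"
    unfolding eq by (rule card_image, rule inj_on_subset[OF edge_inj[OF inj]]) auto
  also have "\<dots> = (if 0 < j then 1 else 0) + (if j < N then 1 else 0)"
  proof (cases j)
    case 0
    then have "{i. i < N \<and> (i = j \<or> Suc i = j)} = (if 0 < N then {0} else {})" by auto
    then show ?thesis using 0 by simp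
  next
    case (Suc j')
    show ?thesis
    proof (cases "j < N")
      case True
      then have "{i. i < N \<and> (i = j \<or> Suc i = j)} = {j', j}" using Suc by auto
      then show ?thesis using Suc True by simp
    next
      case False
      then have "{i. i < N \<and> (i = j \<or> Suc i = j)} = {j'}" using Suc j by auto
      then show ?thesis using Suc False by simp
    qed
  qed
  finally show ?thesis .
qed



definition cnt :: "nat \<Rightarrow> nat list \<Rightarrow> nat \<Rightarrow> nat" where
  "cnt n L j = card {i. i < n \<and> L!i = j}"

definition Ssum :: "nat \<Rightarrow> (nat \<Rightarrow> int) \<Rightarrow> nat list \<Rightarrow> nat \<Rightarrow> int" where
  "Ssum n x L j = (\<Sum>i\<in>{i. i < n \<and> j \<le> L!i}. x i)"

definition base :: "nat \<Rightarrow> nat \<Rightarrow> nat" where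
  "base m j = (if j = 0 \<or> j = m then 2 else 1)"

definition good :: "nat \<Rightarrow> (nat \<Rightarrow> int) \<Rightarrow> nat list \<Rightarrow> nat \<Rightarrow> bool" where
  "good n x L k \<longleftrightarrow> length L = n \<and> (\<forall>i<n. L!i \<le> n - 4) \<and> k \<le> n - 4 \<and>
     (\<forall>j\<le>n - 4. cnt n L j = base (n - 4) j + (if j = k then 1 else 0)) \<and>
     (\<forall>j. 1 \<le> j \<and> j \<le> n - 4 \<longrightarrow> 0 < Ssum n x L j)"

definition key :: "nat \<Rightarrow> (nat \<Rightarrow> int) \<Rightarrow> nat \<Rightarrow> int" where
  "key n x l = x l * int n + int l"

definition invs :: "nat \<Rightarrow> (nat \<Rightarrow> int) \<Rightarrow> nat list \<Rightarrow> (nat \<times> nat) set" where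
  "invs n x L = {(a, b). a < n \<and> b < n \<and> L!a < L!b \<and> key n x b < key n x a}"

lemma key_lt:
  assumes "x a < x b" "a < n"
  shows "key n x a < key n x b"
proof -
  have "(x a + 1) * int n \<le> x b * int n" using assms by (intro mult_right_mono) auto
  then show ?thesis using assms unfolding key_def by (simp add: algebra_simps)
qed

lemma key_le_x:
  assumes "key n x a \<le> key n x b" "b < n"
  shows "x a \<le> x b"
  using key_lt[of x b a n] assms by force

lemma key_inj:
  assumes "key n x a = key n x b" "a < n" "b < n"
  shows "a = b"
proof -
  have "x a = x b" using key_le_x[of n x a b] key_le_x[of n x b a] assms by auto
  then show ?thesis using assms unfolding key_def by simp
qed

lemma exists_max_key:
  assumes "finite A" "A \<noteq> {}"
  shows "\<exists>c\<in>A. \<forall>d\<in>A. key n x d \<le> key n x c"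
proof -
  have "Max (key n x ` A) \<in> key n x ` A" using assms by (intro Max_in) auto
  then obtain c where c: "c \<in> A" "key n x c = Max (key n x ` A)" by auto
  then show ?thesis using assms by (intro bexI[of _ c]) auto
qed

lemma exists_min_key:
  assumes "finite A" "A \<noteq> {}"
  shows "\<exists>c\<in>A. \<forall>d\<in>A. key n x c \<le> key n x d"
proof -
  have "Min (key n x ` A) \<in> key n x ` A" using assms by (intro Min_in) auto
  then obtain c where c: "c \<in> A" "key n x c = Min (key n x ` A)" by auto
  then show ?thesis using assms by (intro bexI[of _ c]) auto
qed

lemma conn_sym:
  assumes "(a, b) \<in> (R \<union> R\<inverse>)\<^sup>*"
  shows "(b, a) \<in> (R \<union> R\<inverse>)\<^sup>*"
proof -
  have "(b, a) \<in> ((R \<union> R\<inverse>)\<inverse>)\<^sup>*" using assms by (simp add: rtrancl_converse)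
  moreover have "(R \<union> R\<inverse>)\<inverse> = R \<union> R\<inverse>" by auto
  ultimately show ?thesis by simp
qed

locale cs =
  fixes n :: nat and x :: "nat \<Rightarrow> int" and p :: "nat \<Rightarrow> real"
  assumes n5: "5 \<le> n" and x0: "(\<Sum>l<n. x l) = 0"
    and pmono: "\<forall>i j. i < j \<and> j \<le> n - 4 \<longrightarrow> p i < p j"
begin

abbreviation m where "m \<equiv> n - 4"
abbreviation PE where "PE \<equiv> PEw (\<lambda>i. i) (n - 4)"
abbreviation Q where "Q \<equiv> (hur_edge n x p \<union> (hur_edge n x p)\<inverse>)\<^sup>*"
abbreviation G where "G L j \<equiv> {i. i < n \<and> L!i = j}"



lemma Ssum_split:
  "Ssum n x L j = (\<Sum>i\<in>G L j. x i) + Ssum n x L (Suc j)"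
proof -
  have e: "{i. i < n \<and> j \<le> L!i} = G L j \<union> {i. i < n \<and> Suc j \<le> L!i}" by auto
  have "(\<Sum>i\<in>G L j \<union> {i. i < n \<and> Suc j \<le> L!i}. x i) =
        (\<Sum>i\<in>G L j. x i) + (\<Sum>i\<in>{i. i < n \<and> Suc j \<le> L!i}. x i)"
    by (rule sum.union_disjoint) auto
  then show ?thesis unfolding Ssum_def e by simp
qed

end


context cs
begin

lemma m1: "1 \<le> m" using n5 by simp

lemma Ssum_0: "length L = n \<Longrightarrow> Ssum n x L 0 = 0"
  unfolding Ssum_def using x0 by (simp add: lessThan_def)

lemma Ssum_top: "\<forall>i<n. L!i \<le> m \<Longrightarrow> Ssum n x L (Suc m) = 0"
proof -
  assume a: "\<forall>i<n. L!i \<le> m"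
  have e: "{i. i < n \<and> Suc m \<le> L!i} = {}" using a by (auto simp: not_le[symmetric])
  show ?thesis unfolding Ssum_def e by simp
qed

lemma Ssum_nonneg:
  assumes "good n x L k" "j \<le> Suc m"
  shows "0 \<le> Ssum n x L j"
proof -
  consider "j = 0" | "1 \<le> j \<and> j \<le> m" | "j = Suc m" using assms(2) by linarith
  then show ?thesis
  proof cases
    case 1 then show ?thesis using Ssum_0 assms(1) by (simp add: good_def)
  next
    case 2 then show ?thesis using assms(1) unfolding good_def by (meson less_imp_le)
  next
    case 3 then show ?thesis using Ssum_top assms(1) by (simp add: good_def)
  qed
qed

lemma good_cnt: "good n x L k \<Longrightarrow> j \<le> m \<Longrightarrow> card (G L j) = base m j + (if j = k then 1 else 0)"
  unfolding good_def cnt_def by blast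

lemma good_nonempty:
  assumes "good n x L k" "j \<le> m"
  shows "G L j \<noteq> {}"
proof -
  have "card (G L j) \<ge> 1" using good_cnt[OF assms] by (simp add: base_def)
  then show ?thesis by (metis card.empty not_one_le_zero)
qed

lemma good_heavy:
  assumes "good n x L k"
  shows "2 \<le> card (G L k)"
  using good_cnt[OF assms] assms by (simp add: base_def good_def)

lemma fin_G: "finite (G L j)" by simp

lemma G_upd:
  assumes "length L = n" "c < n" "L!c = k" "k' \<noteq> k"
  shows "G (L[c := k']) j = (if j = k then G L j - {c} else if j = k' then insert c (G L j) else G L j)"
  using assms by (auto simp: nth_list_update)

lemma Ssum_upd_up:
  assumes "length L = n" "c < n" "L!c = k"
  shows "Ssum n x (L[c := Suc k]) j = (if j = Suc k then Ssum n x L j + x c else Ssum n x L j)"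
proof -
  have e1: "j \<noteq> Suc k \<Longrightarrow> {i. i < n \<and> j \<le> L[c := Suc k]!i} = {i. i < n \<and> j \<le> L!i}"
    using assms by (auto simp: nth_list_update)
  have e2: "{i. i < n \<and> Suc k \<le> L[c := Suc k]!i} = insert c {i. i < n \<and> Suc k \<le> L!i}"
    using assms by (auto simp: nth_list_update)
  have c: "c \<notin> {i. i < n \<and> Suc k \<le> L!i}" using assms by simp
  show ?thesis unfolding Ssum_def using e1 e2 c by (simp add: sum.insert)
qed

lemma Ssum_upd_down:
  assumes "length L = n" "c < n" "L!c = Suc k"
  shows "Ssum n x (L[c := k]) j = (if j = Suc k then Ssum n x L j - x c else Ssum n x L j)"
proof -
  have e1: "j \<noteq> Suc k \<Longrightarrow> {i. i < n \<and> j \<le> L[c := k]!i} = {i. i < n \<and> j \<le> L!i}"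
    using assms by (auto simp: nth_list_update)
  have e2: "{i. i < n \<and> Suc k \<le> L!i} = insert c {i. i < n \<and> Suc k \<le> L[c := k]!i}"
    using assms by (auto simp: nth_list_update)
  have c: "c \<notin> {i. i < n \<and> Suc k \<le> L[c := k]!i}" using assms by simp
  show ?thesis unfolding Ssum_def using e1 e2 c by (simp add: sum.insert)
qed

lemma sum_rest_le:
  assumes "finite A" "c \<in> A" "2 \<le> card A" "\<forall>d\<in>A. x d \<le> x c"
  shows "(\<Sum>d\<in>A. x d) \<le> x c + (\<Sum>d\<in>A - {c}. x c)"
    and "card (A - {c}) \<ge> 1"
proof -
  have "(\<Sum>d\<in>A. x d) = x c + (\<Sum>d\<in>A - {c}. x d)" using assms by (simp add: sum.remove)
  also have "\<dots> \<le> x c + (\<Sum>d\<in>A - {c}. x c)" using assms by (intro add_left_mono sum_mono) auto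
  finally show "(\<Sum>d\<in>A. x d) \<le> x c + (\<Sum>d\<in>A - {c}. x c)" .
  show "card (A - {c}) \<ge> 1" using assms by simp
qed

lemma sum_rest_ge:
  assumes "finite A" "c \<in> A" "2 \<le> card A" "\<forall>d\<in>A. x c \<le> x d"
  shows "(\<Sum>d\<in>A. x d) \<ge> x c + (\<Sum>d\<in>A - {c}. x c)"
proof -
  have "(\<Sum>d\<in>A. x d) = x c + (\<Sum>d\<in>A - {c}. x d)" using assms by (simp add: sum.remove)
  also have "\<dots> \<ge> x c + (\<Sum>d\<in>A - {c}. x c)" using assms by (intro add_left_mono sum_mono) auto
  finally show ?thesis .
qed

lemma up_good:
  assumes g: "good n x L k" and k: "k < m" and c: "c < n" "L!c = k"
    and mx: "\<forall>d\<in>G L k. key n x d \<le> key n x c"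
  shows "good n x (L[c := Suc k]) (Suc k)"
proof -
  have len: "length L = n" using g by (simp add: good_def)
  have bnd: "\<forall>i<n. L!i \<le> m" using g by (simp add: good_def)
  have xle: "\<forall>d\<in>G L k. x d \<le> x c" using mx c key_le_x by blast
  have cG: "c \<in> G L k" using c by simp
  have pos: "0 < Ssum n x L (Suc k) + x c"
  proof (rule ccontr)
    assume "\<not> ?thesis"
    then have h: "Ssum n x L (Suc k) + x c \<le> 0" by simp
    have sp: "0 < Ssum n x L (Suc k)" using g k unfolding good_def by simp
    then have xc: "x c < 0" using h by simp
    have c1: "card (G L k - {c}) \<ge> 1"
      using sum_rest_le(2)[OF fin_G cG good_heavy[OF g] xle] .
    have "(\<Sum>d\<in>G L k - {c}. x c) = int (card (G L k - {c})) * x c" by simp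
    also have "\<dots> \<le> x c" using c1 xc
      by (metis mult_le_cancel_right2 nat_le_iff of_nat_1 of_nat_le_iff order_less_imp_le zero_le_imp_eq_int linorder_not_le mult_left_le_one_le)
    finally have "(\<Sum>d\<in>G L k - {c}. x c) \<le> x c" .
    then have "(\<Sum>d\<in>G L k. x d) \<le> 2 * x c"
      using sum_rest_le(1)[OF fin_G cG good_heavy[OF g] xle] by simp
    then have "Ssum n x L k < 0" using Ssum_split[of L k] h xc by simp
    moreover have "0 \<le> Ssum n x L k" using Ssum_nonneg[OF g] k by simp
    ultimately show False by simp
  qed
  show ?thesis
    unfolding good_def
  proof (intro conjI allI impI)
    show "length (L[c := Suc k]) = n" using len by simp
    show "\<And>i. i < n \<Longrightarrow> L[c := Suc k] ! i \<le> m" using bnd k len c by (auto simp: nth_list_update)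
    show "Suc k \<le> m" using k by simp
    fix j
    show "j \<le> m \<Longrightarrow> cnt n (L[c := Suc k]) j = base m j + (if j = Suc k then 1 else 0)"
    proof -
      assume j: "j \<le> m"
      have "cnt n (L[c := Suc k]) j = card (G (L[c := Suc k]) j)" by (simp add: cnt_def)
      also have "\<dots> = base m j + (if j = Suc k then 1 else 0)"
      proof (cases "j = k")
        case True
        then show ?thesis using G_upd[OF len c, of "Suc k" j] good_cnt[OF g j] cG by simp
      next
        case False
        note F = False
        show ?thesis
        proof (cases "j = Suc k")
          case True
          have "c \<notin> G L j" using True c by simp
          then show ?thesis using G_upd[OF len c, of "Suc k" j] good_cnt[OF g j] True F by simp
        next
          case False
          then show ?thesis using G_upd[OF len c, of "Suc k" j] good_cnt[OF g j] F by simp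
        qed
      qed
      finally show ?thesis .
    qed
    show "1 \<le> j \<and> j \<le> m \<Longrightarrow> 0 < Ssum n x (L[c := Suc k]) j"
      using Ssum_upd_up[OF len c, of j] pos g unfolding good_def by auto
  qed
qed

end


context cs
begin

lemma down_good:
  assumes g: "good n x L (Suc k)" and c: "a < n" "L!a = Suc k"
    and mn: "\<forall>d\<in>G L (Suc k). key n x a \<le> key n x d"
  shows "good n x (L[a := k]) k"
proof -
  have len: "length L = n" using g by (simp add: good_def)
  have bnd: "\<forall>i<n. L!i \<le> m" using g by (simp add: good_def)
  have km: "Suc k \<le> m" using g by (simp add: good_def)
  have xge: "\<forall>d\<in>G L (Suc k). x a \<le> x d" using mn key_le_x by blast
  have cG: "a \<in> G L (Suc k)" using c by simp
  have pos: "0 < Ssum n x L (Suc k) - x a"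
  proof (rule ccontr)
    assume "\<not> ?thesis"
    then have h: "Ssum n x L (Suc k) \<le> x a" by simp
    have sp: "0 < Ssum n x L (Suc k)" using g km unfolding good_def by simp
    then have xc: "0 < x a" using h by simp
    have c1: "card (G L (Suc k) - {a}) \<ge> 1" using good_heavy[OF g] cG by simp
    have "x a \<le> int (card (G L (Suc k) - {a})) * x a" using c1 xc by simp
    also have "\<dots> = (\<Sum>d\<in>G L (Suc k) - {a}. x a)" by simp
    finally have "x a \<le> (\<Sum>d\<in>G L (Suc k) - {a}. x a)" .
    then have "(\<Sum>d\<in>G L (Suc k). x d) \<ge> 2 * x a"
      using sum_rest_ge[OF fin_G cG good_heavy[OF g] xge] by simp
    moreover have "0 \<le> Ssum n x L (Suc (Suc k))" using Ssum_nonneg[OF g] km by simp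
    ultimately have "Ssum n x L (Suc k) \<ge> 2 * x a" using Ssum_split[of L "Suc k"] by simp
    then show False using h xc by simp
  qed
  have ck: "L!a \<noteq> k" using c by simp
  show ?thesis
    unfolding good_def
  proof (intro conjI allI impI)
    show "length (L[a := k]) = n" using len by simp
    show "\<And>i. i < n \<Longrightarrow> L[a := k] ! i \<le> m" using bnd km len c by (auto simp: nth_list_update)
    show "k \<le> m" using km by simp
    fix j
    show "j \<le> m \<Longrightarrow> cnt n (L[a := k]) j = base m j + (if j = k then 1 else 0)"
    proof -
      assume j: "j \<le> m"
      have "cnt n (L[a := k]) j = card (G (L[a := k]) j)" by (simp add: cnt_def)
      also have "\<dots> = base m j + (if j = k then 1 else 0)"
      proof (cases "j = Suc k")
        case True
        then show ?thesis using G_upd[OF len c, of k j] good_cnt[OF g j] cG by simp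
      next
        case False
        note F = False
        show ?thesis
        proof (cases "j = k")
          case True
          have "a \<notin> G L j" using True c by simp
          then show ?thesis using G_upd[OF len c, of k j] good_cnt[OF g j] True F by simp
        next
          case False
          then show ?thesis using G_upd[OF len c, of k j] good_cnt[OF g j] F by simp
        qed
      qed
      finally show ?thesis .
    qed
    show "1 \<le> j \<and> j \<le> m \<Longrightarrow> 0 < Ssum n x (L[a := k]) j"
      using Ssum_upd_down[OF len c, of j] pos g unfolding good_def by auto
  qed
qed

lemma invs_fin: "finite (invs n x L)"
proof -
  have "invs n x L \<subseteq> {..<n} \<times> {..<n}" unfolding invs_def by auto
  then show ?thesis by (rule finite_subset) auto
qed

lemma invs_up:
  assumes len: "length L = n" and c: "c < n" "L!c = k"
    and mx: "\<forall>d\<in>G L k. key n x d \<le> key n x c"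
  shows "invs n x (L[c := Suc k]) \<subseteq> invs n x L"
    and "(\<exists>b<n. L!b = Suc k \<and> key n x b < key n x c) \<Longrightarrow> card (invs n x (L[c := Suc k])) < card (invs n x L)"
proof -
  show sub: "invs n x (L[c := Suc k]) \<subseteq> invs n x L"
  proof
    fix z assume z: "z \<in> invs n x (L[c := Suc k])"
    obtain a b where ab: "z = (a, b)" by (cases z)
    have h: "a < n" "b < n" "L[c := Suc k]!a < L[c := Suc k]!b" "key n x b < key n x a"
      using z ab unfolding invs_def by auto
    have "L!a < L!b"
    proof (cases "a = c")
      case True
      then show ?thesis using h len c by (auto simp: nth_list_update split: if_splits)
    next
      case False
      note F = False
      show ?thesis
      proof (cases "b = c")
        case True
        then have "L!a \<le> k" using h len c F by (auto simp: nth_list_update)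
        moreover have "L!a \<noteq> k"
        proof
          assume "L!a = k"
          then have "key n x a \<le> key n x c" using mx h by auto
          then show False using h True by simp
        qed
        ultimately show ?thesis using True c by simp
      next
        case False
        then show ?thesis using h len F by (simp add: nth_list_update)
      qed
    qed
    then show "z \<in> invs n x L" using h ab unfolding invs_def by auto
  qed
  assume "\<exists>b<n. L!b = Suc k \<and> key n x b < key n x c"
  then obtain b where b: "b < n" "L!b = Suc k" "key n x b < key n x c" by blast
  have bc: "b \<noteq> c" using b c by auto
  have "(c, b) \<in> invs n x L" using b c unfolding invs_def by auto
  moreover have "(c, b) \<notin> invs n x (L[c := Suc k])" using b c bc len unfolding invs_def
    by (auto simp: nth_list_update)
  ultimately have "invs n x (L[c := Suc k]) \<subset> invs n x L" using sub by blast
  then show "card (invs n x (L[c := Suc k])) < card (invs n x L)"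
    by (rule psubset_card_mono[OF invs_fin])
qed

lemma invs_down:
  assumes len: "length L = n" and c: "a < n" "L!a = Suc k"
    and mn: "\<forall>d\<in>G L (Suc k). key n x a \<le> key n x d"
  shows "invs n x (L[a := k]) \<subseteq> invs n x L"
    and "(\<exists>b<n. L!b = k \<and> key n x a < key n x b) \<Longrightarrow> card (invs n x (L[a := k])) < card (invs n x L)"
proof -
  show sub: "invs n x (L[a := k]) \<subseteq> invs n x L"
  proof
    fix z assume z: "z \<in> invs n x (L[a := k])"
    obtain u v where ab: "z = (u, v)" by (cases z)
    have h: "u < n" "v < n" "L[a := k]!u < L[a := k]!v" "key n x v < key n x u"
      using z ab unfolding invs_def by auto
    have "L!u < L!v"
    proof (cases "v = a")
      case True
      then show ?thesis using h len c by (auto simp: nth_list_update split: if_splits)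
    next
      case False
      note F = False
      show ?thesis
      proof (cases "u = a")
        case True
        then have "Suc k \<le> L!v" using h len c F by (auto simp: nth_list_update)
        moreover have "L!v \<noteq> Suc k"
        proof
          assume "L!v = Suc k"
          then have "key n x a \<le> key n x v" using mn h by auto
          then show False using h True by simp
        qed
        ultimately show ?thesis using True c by simp
      next
        case False
        then show ?thesis using h len F by (simp add: nth_list_update)
      qed
    qed
    then show "z \<in> invs n x L" using h ab unfolding invs_def by auto
  qed
  assume "\<exists>b<n. L!b = k \<and> key n x a < key n x b"
  then obtain b where b: "b < n" "L!b = k" "key n x a < key n x b" by blast
  have bc: "b \<noteq> a" using b c by auto
  have "(b, a) \<in> invs n x L" using b c unfolding invs_def by auto
  moreover have "(b, a) \<notin> invs n x (L[a := k])" using b c bc len unfolding invs_def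
    by (auto simp: nth_list_update)
  ultimately have "invs n x (L[a := k]) \<subset> invs n x L" using sub by blast
  then show "card (invs n x (L[a := k])) < card (invs n x L)"
    by (rule psubset_card_mono[OF invs_fin])
qed

end


definition wc :: "nat \<Rightarrow> nat \<Rightarrow> nat \<Rightarrow> nat" where
  "wc k v i = (if i \<le> k then i else if i = Suc k then v else i - 1)"

definition qc :: "nat list \<Rightarrow> nat \<Rightarrow> nat \<Rightarrow> nat \<Rightarrow> nat" where
  "qc L k c l = (if l = c then Suc k else if L!l \<le> k then L!l else Suc (L!l))"


lemma contract_edges:
  assumes gd: "\<forall>i \<le> Suc m. g i = (if i \<le> t then i else i - 1)" and t: "t \<le> m"
  shows "(\<lambda>i. {g i, g (Suc i)}) ` ({..<Suc m} - {t}) = (\<lambda>i. {i, Suc i}) ` {..<m}"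
proof
  show "(\<lambda>i. {g i, g (Suc i)}) ` ({..<Suc m} - {t}) \<subseteq> (\<lambda>i. {i, Suc i}) ` {..<m}"
  proof
    fix e assume "e \<in> (\<lambda>i. {g i, g (Suc i)}) ` ({..<Suc m} - {t})"
    then obtain i where i: "i < Suc m" "i \<noteq> t" "e = {g i, g (Suc i)}" by auto
    show "e \<in> (\<lambda>i. {i, Suc i}) ` {..<m}"
    proof (cases "i < t")
      case True
      then have "g i = i" "g (Suc i) = Suc i" using gd i by auto
      then show ?thesis using i True t by (intro image_eqI[of _ _ i]) auto
    next
      case False
      then have ti: "t < i" using i by simp
      then have "g i = i - 1" "g (Suc i) = Suc (i - 1)" using gd i by auto
      then show ?thesis using i ti by (intro image_eqI[of _ _ "i - 1"]) auto
    qed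
  qed
  show "(\<lambda>i. {i, Suc i}) ` {..<m} \<subseteq> (\<lambda>i. {g i, g (Suc i)}) ` ({..<Suc m} - {t})"
  proof
    fix e assume "e \<in> (\<lambda>i. {i, Suc i}) ` {..<m}"
    then obtain j where j: "j < m" "e = {j, Suc j}" by auto
    show "e \<in> (\<lambda>i. {g i, g (Suc i)}) ` ({..<Suc m} - {t})"
    proof (cases "j < t")
      case True
      then have "g j = j" "g (Suc j) = Suc j" using gd j by auto
      then show ?thesis using j True by (intro image_eqI[of _ _ j]) auto
    next
      case False
      then have "g (Suc j) = j" "g (Suc (Suc j)) = Suc j" using gd j by auto
      then show ?thesis using j False by (intro image_eqI[of _ _ "Suc j"]) auto
    qed
  qed
qed

context cs
begin

lemma v_eq: "n - 3 = Suc m" using n5 by simp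

context
  fixes L k c
  assumes g: "good n x L k" and k: "k < m" and c: "c < n" "L!c = k"
    and g2: "good n x (L[c := Suc k]) (Suc k)"
begin

abbreviation v where "v \<equiv> Suc m"
abbreviation W where "W \<equiv> wc k (Suc m)"
abbreviation LT where "LT \<equiv> L[c := Suc m]"
abbreviation q where "q \<equiv> qc L k c"
abbreviation Fs where "Fs i \<equiv> (\<Sum>l\<in>{l. l < n \<and> Suc i \<le> q l}. x l)"

lemma len: "length L = n" using g by (simp add: good_def)
lemma bnd: "i < n \<Longrightarrow> L!i \<le> m" using g by (simp add: good_def)

lemma W_inj: "inj_on W {..Suc m}"
proof (rule inj_onI)
  fix i j assume "i \<in> {..Suc m}" "j \<in> {..Suc m}" "W i = W j"
  then show "i = j" using k unfolding wc_def by (auto split: if_splits)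
qed

lemma W_img: "W ` {..Suc m} = {..Suc m}"
proof
  show "W ` {..Suc m} \<subseteq> {..Suc m}" unfolding wc_def by auto
  show "{..Suc m} \<subseteq> W ` {..Suc m}"
  proof
    fix u assume u: "u \<in> {..Suc m}"
    consider "u \<le> k" | "u = Suc m" | "k < u \<and> u \<le> m" using u by force
    then show "u \<in> W ` {..Suc m}"
    proof cases
      case 1 then show ?thesis using k by (intro image_eqI[of _ _ u]) (auto simp: wc_def)
    next
      case 2 then show ?thesis using k by (intro image_eqI[of _ _ "Suc k"]) (auto simp: wc_def)
    next
      case 3 then show ?thesis by (intro image_eqI[of _ _ "Suc u"]) (auto simp: wc_def)
    qed
  qed
qed

lemma W_v: "j \<le> Suc m \<Longrightarrow> W j = Suc m \<longleftrightarrow> j = Suc k"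
  using k unfolding wc_def by auto

lemma q_ok: "\<forall>l<length LT. q l \<le> Suc m \<and> LT!l = W (q l)"
proof (intro allI impI)
  fix l assume "l < length LT"
  then have l: "l < n" using len by simp
  show "q l \<le> Suc m \<and> LT!l = W (q l)"
  proof (cases "l = c")
    case True then show ?thesis using k len c by (simp add: qc_def wc_def)
  next
    case False
    then show ?thesis using bnd[OF l] len l by (auto simp: qc_def wc_def)
  qed
qed

lemma lenT: "length LT = n" using len by simp

lemma flowT:
  assumes "i < Suc m"
  shows "flow x (PEw W (Suc m), LT) (W i) (W (Suc i)) = Fs i"
    and "flow x (PEw W (Suc m), LT) (W (Suc i)) (W i) = - Fs i"
  using flow_path[OF W_inj assms q_ok lenT x0] by simp_all

lemma Fs_pos:
  assumes i: "i < Suc m"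
  shows "0 < Fs i"
proof -
  have pos: "\<And>M k' j. good n x M k' \<Longrightarrow> 1 \<le> j \<Longrightarrow> j \<le> m \<Longrightarrow> 0 < Ssum n x M j"
    unfolding good_def by blast
  consider "i < k" | "i = k" | "i = Suc k" | "Suc k < i" by linarith
  then show ?thesis
  proof cases
    case 1
    have "{l. l < n \<and> Suc i \<le> q l} = {l. l < n \<and> Suc i \<le> L!l}"
      using 1 c by (auto simp: qc_def)
    then show ?thesis using pos[OF g, of "Suc i"] 1 k unfolding Ssum_def by simp
  next
    case 2
    have "{l. l < n \<and> Suc i \<le> q l} = {l. l < n \<and> Suc k \<le> L[c := Suc k]!l}"
      using 2 c len by (auto simp: qc_def nth_list_update)
    then show ?thesis using pos[OF g2, of "Suc k"] 2 k unfolding Ssum_def by simp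
  next
    case 3
    have "{l. l < n \<and> Suc i \<le> q l} = {l. l < n \<and> Suc k \<le> L!l}"
      using 3 c by (auto simp: qc_def)
    then show ?thesis using pos[OF g, of "Suc k"] 3 k unfolding Ssum_def by simp
  next
    case 4
    have "{l. l < n \<and> Suc i \<le> q l} = {l. l < n \<and> i \<le> L!l}"
      using 4 c by (auto simp: qc_def)
    then show ?thesis using pos[OF g, of i] 4 i unfolding Ssum_def by simp
  qed
qed


abbreviation TT where "TT \<equiv> (PEw W (Suc m), LT)"

lemma Wk: "W k = k" by (simp add: wc_def)
lemma WSk: "W (Suc k) = Suc m" by (simp add: wc_def)
lemma WSSk: "W (Suc (Suc k)) = Suc k" by (simp add: wc_def)

lemma flow_nz:
  assumes "{a, b} \<in> fst TT"
  shows "flow x TT a b \<noteq> 0"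
proof -
  obtain i where i: "i < Suc m" "(a = W i \<and> b = W (Suc i)) \<or> (a = W (Suc i) \<and> b = W i)"
    using assms by (auto simp: PEw_mem)
  then show ?thesis using flowT[OF i(1)] Fs_pos[OF i(1)] by auto
qed

lemma flow_marked:
  assumes e: "{a, b} \<in> fst TT" and ab: "a < n - 3" "b < n - 3" and pab: "p a < p b"
  shows "flow x TT a b > 0"
proof -
  obtain i where i: "i < Suc m" "(a = W i \<and> b = W (Suc i)) \<or> (a = W (Suc i) \<and> b = W i)"
    using e by (auto simp: PEw_mem)
  show ?thesis
  proof (cases "a = W i \<and> b = W (Suc i)")
    case True then show ?thesis using flowT[OF i(1)] Fs_pos[OF i(1)] by auto
  next
    case False
    then have h: "a = W (Suc i)" "b = W i" using i by auto
    have "W (Suc i) \<noteq> Suc m" "W i \<noteq> Suc m" using h ab v_eq by auto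
    then have "i \<noteq> k" "i \<noteq> Suc k" using W_v i by auto
    then have "b < a" using h unfolding wc_def by auto
    moreover have "a \<le> n - 4" using ab v_eq by simp
    ultimately have "p b < p a" using pmono by blast
    then show ?thesis using pab by simp
  qed
qed

lemma adj_v: "{a, Suc m} \<in> fst TT \<longleftrightarrow> a = k \<or> a = Suc k"
proof
  assume "{a, Suc m} \<in> fst TT"
  then obtain i where i: "i < Suc m" "(a = W i \<and> Suc m = W (Suc i)) \<or> (a = W (Suc i) \<and> Suc m = W i)"
    by (auto simp: PEw_mem)
  show "a = k \<or> a = Suc k"
  proof (cases "a = W i \<and> Suc m = W (Suc i)")
    case True
    then have "i = k" using W_v[of "Suc i"] i by auto
    then show ?thesis using True Wk by simp
  next
    case False
    then have h: "a = W (Suc i)" "Suc m = W i" using i by auto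
    then have "i = Suc k" using W_v[of i] i by auto
    then show ?thesis using h WSSk by simp
  qed
next
  assume "a = k \<or> a = Suc k"
  then show "{a, Suc m} \<in> fst TT"
  proof
    assume a: "a = k"
    have "\<exists>i<Suc m. (k = W i \<and> Suc m = W (Suc i)) \<or> (k = W (Suc i) \<and> Suc m = W i)"
      using k Wk WSk by (intro exI[of _ k]) auto
    then show ?thesis unfolding fst_conv PEw_mem a .
  next
    assume a: "a = Suc k"
    have "\<exists>i<Suc m. (Suc k = W i \<and> Suc m = W (Suc i)) \<or> (Suc k = W (Suc i) \<and> Suc m = W i)"
      using k WSk WSSk by (intro exI[of _ "Suc k"]) auto
    then show ?thesis unfolding fst_conv PEw_mem a .
  qed
qed

lemma fl_k_v: "flow x TT k (Suc m) = Fs k" using flowT(1)[of k] k Wk WSk by simp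
lemma fl_v_k: "flow x TT (Suc m) k = - Fs k" using flowT(2)[of k] k Wk WSk by simp
lemma fl_Sk_v: "flow x TT (Suc k) (Suc m) = - Fs (Suc k)" using flowT(2)[of "Suc k"] k WSk WSSk by simp
lemma fl_v_Sk: "flow x TT (Suc m) (Suc k) = Fs (Suc k)" using flowT(1)[of "Suc k"] k WSk WSSk by simp

lemma in_nb_T: "in_nb x n TT = {k}"
proof -
  have "0 < Fs k" "0 < Fs (Suc k)" using Fs_pos k by auto
  then show ?thesis unfolding in_nb_def v_eq using adj_v fl_k_v fl_Sk_v by auto
qed

lemma out_nb_T: "out_nb x n TT = {Suc k}"
proof -
  have "0 < Fs k" "0 < Fs (Suc k)" using Fs_pos k by auto
  then show ?thesis unfolding out_nb_def v_eq using adj_v fl_v_k fl_v_Sk by auto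
qed

lemma leafT: "u \<noteq> Suc m \<Longrightarrow> {i. i < length LT \<and> LT!i = u} = G L u - {c}"
  using len c by (auto simp: nth_list_update)

lemma leafT_v: "{i. i < length LT \<and> LT!i = Suc m} = {c}"
proof -
  have "\<And>i. i < n \<Longrightarrow> i \<noteq> c \<Longrightarrow> L!i \<noteq> Suc m" using bnd by fastforce
  then show ?thesis using len c by (auto simp: nth_list_update)
qed

lemma val_T:
  assumes u: "u \<le> Suc m"
  shows "val TT u = 3"
proof -
  have vd: "val TT u = card {e \<in> PEw W (Suc m). u \<in> e} + card {i. i < length LT \<and> LT!i = u}"
    unfolding val_def by simp
  consider "u = Suc m" | "u < k" | "u = k" | "k < u \<and> u \<le> m" using u by force
  then show ?thesis
  proof cases
    case 1
    have "card {e \<in> PEw W (Suc m). u \<in> e} = 2"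
      using ecount_path[OF W_inj, of "Suc k"] k WSk 1 by simp
    then show ?thesis using vd leafT_v 1 by simp
  next
    case 2
    have Wu: "W u = u" using 2 by (simp add: wc_def)
    have "card {e \<in> PEw W (Suc m). u \<in> e} = (if 0 < u then 1 else 0) + 1"
      using ecount_path[OF W_inj, of u] k 2 Wu by simp
    moreover have "card (G L u - {c}) = base m u" using good_cnt[OF g, of u] 2 k c by simp
    ultimately show ?thesis using vd leafT[of u] 2 k by (simp add: base_def)
  next
    case 3
    have "card {e \<in> PEw W (Suc m). u \<in> e} = (if 0 < u then 1 else 0) + 1"
      using ecount_path[OF W_inj, of u] k 3 Wk by simp
    moreover have "card (G L u - {c}) = base m u" using good_cnt[OF g, of u] 3 k c by simp
    ultimately show ?thesis using vd leafT[of u] 3 k by (simp add: base_def)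
  next
    case 4
    have Wu: "W (Suc u) = u" using 4 by (simp add: wc_def)
    have "card {e \<in> PEw W (Suc m). u \<in> e} = 1 + (if u < m then 1 else 0)"
      using ecount_path[OF W_inj, of "Suc u"] k 4 Wu by simp
    moreover have "card (G L u - {c}) = base m u" using good_cnt[OF g, of u] 4 k c by simp
    ultimately show ?thesis using vd leafT[of u] 4 k by (simp add: base_def)
  qed
qed

lemma ntype_T: "ntype n {..n-3} TT"
  unfolding ntype_def
proof (intro conjI allI impI ballI)
  show "is_tree {..n - 3} (fst TT)" using tree_path[OF W_inj] W_img v_eq by simp
  show "length (snd TT) = n" using len by simp
  fix i assume i: "i < n"
  then show "snd TT ! i \<in> {..n - 3}" using bnd[OF i] len c v_eq by (auto simp: nth_list_update)
next
  fix u assume "u \<in> {..n - 3}"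
  then show "3 \<le> val TT u" using val_T v_eq by simp
qed

lemma edge_cell_T: "edge_cell n x p TT"
  unfolding edge_cell_def
proof (intro conjI allI impI)
  show "ntype n {..n - 3} TT" by (rule ntype_T)
  show "\<And>u. u \<le> n - 3 \<Longrightarrow> val TT u = 3" using val_T v_eq by simp
  show "\<And>a b. {a, b} \<in> fst TT \<Longrightarrow> flow x TT a b \<noteq> 0" by (rule flow_nz)
  show "\<And>a b. {a, b} \<in> fst TT \<and> a < n - 3 \<and> b < n - 3 \<and> p a < p b \<Longrightarrow> 0 < flow x TT a b"
    using flow_marked by blast
  show "in_nb x n TT \<noteq> {}" "out_nb x n TT \<noteq> {}" using in_nb_T out_nb_T by auto
  show "\<forall>a\<in>in_nb x n TT. \<forall>b\<in>out_nb x n TT. p a < p b"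
    using in_nb_T out_nb_T pmono k by simp
qed

lemma edges_minus:
  assumes t: "t \<le> m"
  shows "fst TT - {{W t, W (Suc t)}} = (\<lambda>i. {W i, W (Suc i)}) ` ({..<Suc m} - {t})"
proof -
  have "(\<lambda>i. {W i, W (Suc i)}) ` ({..<Suc m} - {t}) =
        (\<lambda>i. {W i, W (Suc i)}) ` {..<Suc m} - (\<lambda>i. {W i, W (Suc i)}) ` {t}"
    by (rule inj_on_image_set_diff[OF edge_inj[OF W_inj]]) (use t in auto)
  then show ?thesis unfolding PEw_def by simp
qed

lemma contract_k: "contract n TT k = (PE, L)"
proof -
  define f where "f = (\<lambda>u. if u = n - 3 then k else u)"
  have e1: "{k, n - 3} = {W k, W (Suc k)}" using Wk WSk v_eq by simp
  have "(\<lambda>e. f ` e) ` (fst TT - {{k, n - 3}}) = (\<lambda>i. {f (W i), f (W (Suc i))}) ` ({..<Suc m} - {k})"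
    unfolding e1 edges_minus[OF less_imp_le[OF k]] image_image by simp
  also have "\<dots> = PE" unfolding PEw_def
  proof (rule contract_edges)
    show "\<forall>i\<le>Suc m. f (W i) = (if i \<le> k then i else i - 1)"
      using k v_eq unfolding f_def wc_def by auto
  qed (use k in simp)
  finally have E: "(\<lambda>e. f ` e) ` (fst TT - {{k, n - 3}}) = PE" .
  have M: "map f (snd TT) = L"
  proof (rule nth_equalityI)
    show "length (map f (snd TT)) = length L" by simp
    fix i assume "i < length (map f (snd TT))"
    then have i: "i < n" using len by simp
    show "map f (snd TT) ! i = L ! i"
      using i len c bnd[OF i] v_eq unfolding f_def by (auto simp: nth_list_update)
  qed
  show ?thesis unfolding contract_def Let_def f_def[symmetric] E M ..
qed

lemma contract_Sk: "contract n TT (Suc k) = (PE, L[c := Suc k])"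
proof -
  define f where "f = (\<lambda>u. if u = n - 3 then Suc k else u)"
  have e1: "{Suc k, n - 3} = {W (Suc k), W (Suc (Suc k))}" using WSSk WSk v_eq by auto
  have "(\<lambda>e. f ` e) ` (fst TT - {{Suc k, n - 3}}) =
        (\<lambda>i. {f (W i), f (W (Suc i))}) ` ({..<Suc m} - {Suc k})"
    unfolding e1 edges_minus[OF Suc_leI[OF k]] image_image by simp
  also have "\<dots> = PE" unfolding PEw_def
  proof (rule contract_edges)
    show "\<forall>i\<le>Suc m. f (W i) = (if i \<le> Suc k then i else i - 1)"
      using k v_eq unfolding f_def wc_def by auto
  qed (use k in simp)
  finally have E: "(\<lambda>e. f ` e) ` (fst TT - {{Suc k, n - 3}}) = PE" .
  have M: "map f (snd TT) = L[c := Suc k]"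
  proof (rule nth_equalityI)
    show "length (map f (snd TT)) = length (L[c := Suc k])" by simp
    fix i assume "i < length (map f (snd TT))"
    then have i: "i < n" using len by simp
    show "map f (snd TT) ! i = L[c := Suc k] ! i"
      using i len c bnd[OF i] v_eq unfolding f_def by (auto simp: nth_list_update)
  qed
  show ?thesis unfolding contract_def Let_def f_def[symmetric] E M ..
qed

lemma geo_main: "((PE, L), (PE, L[c := Suc k])) \<in> hur_edge n x p"
  unfolding hur_edge_def
proof (intro CollectI case_prodI exI conjI)
  show "edge_cell n x p TT" by (rule edge_cell_T)
  show "k \<in> in_nb x n TT" "Suc k \<in> out_nb x n TT" using in_nb_T out_nb_T by auto
  show "\<forall>a'\<in>in_nb x n TT. p a' \<le> p k" "\<forall>b'\<in>out_nb x n TT. p (Suc k) \<le> p b'"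
    using in_nb_T out_nb_T by auto
  show "(PE, L) = contract n TT k" using contract_k by simp
  show "(PE, L[c := Suc k]) = contract n TT (Suc k)" using contract_Sk by simp
qed

end
end

context cs
begin

lemma geo:
  assumes "good n x L k" "k < m" "c < n" "L!c = k" "good n x (L[c := Suc k]) (Suc k)"
  shows "((PE, L), (PE, L[c := Suc k])) \<in> hur_edge n x p"
  by (rule geo_main[OF assms])

end


context cs
begin

lemma step_up:
  assumes g: "good n x L k" and k: "k < m" and c: "c < n" "L!c = k"
    and mx: "\<forall>d\<in>G L k. key n x d \<le> key n x c"
  shows "good n x (L[c := Suc k]) (Suc k) \<and> ((PE, L), (PE, L[c := Suc k])) \<in> Q"
proof -
  have g2: "good n x (L[c := Suc k]) (Suc k)" by (rule up_good[OF g k c mx])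
  have "((PE, L), (PE, L[c := Suc k])) \<in> hur_edge n x p" by (rule geo[OF g k c g2])
  then show ?thesis using g2 by blast
qed

lemma step_down:
  assumes g: "good n x L (Suc k)" and c: "a < n" "L!a = Suc k"
    and mn: "\<forall>d\<in>G L (Suc k). key n x a \<le> key n x d"
  shows "good n x (L[a := k]) k \<and> ((PE, L), (PE, L[a := k])) \<in> Q"
proof -
  have g2: "good n x (L[a := k]) k" by (rule down_good[OF g c mn])
  have len: "length L = n" using g by (simp add: good_def)
  have km: "k < m" using g by (simp add: good_def)
  have a1: "L[a := k] ! a = k" using len c by simp
  have a2: "(L[a := k])[a := Suc k] = L" using c len by (metis list_update_id list_update_overwrite)
  have "((PE, L[a := k]), (PE, (L[a := k])[a := Suc k])) \<in> hur_edge n x p"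
    by (rule geo[OF g2 km c(1) a1]) (unfold a2, rule g)
  then have "((PE, L), (PE, L[a := k])) \<in> (hur_edge n x p)\<inverse>" using a2 by simp
  then show ?thesis using g2 by blast
qed

lemma up_reduce:
  assumes "good n x L k" "k \<le> j" "j < m" "a < n" "b < n" "L!a = j" "L!b = Suc j"
    "key n x b < key n x a"
  shows "\<exists>L' k'. good n x L' k' \<and> ((PE, L), (PE, L')) \<in> Q \<and> card (invs n x L') < card (invs n x L)"
  using assms
proof (induction "j - k" arbitrary: L k)
  case 0
  then have kj: "k = j" by simp
  have km: "k < m" using 0 kj by simp
  obtain c where c: "c \<in> G L k" "\<forall>d\<in>G L k. key n x d \<le> key n x c"
    using exists_max_key[OF fin_G good_nonempty[OF 0(2)], of k n x] km by auto
  have cc: "c < n" "L!c = k" using c by auto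
  have st: "good n x (L[c := Suc k]) (Suc k) \<and> ((PE, L), (PE, L[c := Suc k])) \<in> Q"
    by (rule step_up[OF 0(2) km cc c(2)])
  have len: "length L = n" using 0(2) by (simp add: good_def)
  have "key n x a \<le> key n x c" using c(2) 0 kj by auto
  then have "\<exists>b<n. L!b = Suc k \<and> key n x b < key n x c" using 0 kj by auto
  then have "card (invs n x (L[c := Suc k])) < card (invs n x L)"
    by (rule invs_up(2)[OF len cc c(2)])
  then show ?case using st by blast
next
  case (Suc d)
  then have kj: "k < j" by simp
  have km: "k < m" using Suc kj by simp
  obtain c where c: "c \<in> G L k" "\<forall>d\<in>G L k. key n x d \<le> key n x c"
    using exists_max_key[OF fin_G good_nonempty[OF Suc(3)], of k n x] km by auto
  have cc: "c < n" "L!c = k" using c by auto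
  have st: "good n x (L[c := Suc k]) (Suc k) \<and> ((PE, L), (PE, L[c := Suc k])) \<in> Q"
    by (rule step_up[OF Suc(3) km cc c(2)])
  have len: "length L = n" using Suc(3) by (simp add: good_def)
  have sub: "card (invs n x (L[c := Suc k])) \<le> card (invs n x L)"
    by (rule card_mono[OF invs_fin invs_up(1)[OF len cc c(2)]])
  have ac: "a \<noteq> c" "b \<noteq> c" using Suc kj cc by auto
  have "\<exists>L' k'. good n x L' k' \<and> ((PE, L[c := Suc k]), (PE, L')) \<in> Q \<and>
          card (invs n x L') < card (invs n x (L[c := Suc k]))"
  proof (rule Suc(1))
    show "d = j - Suc k" using Suc(2) by simp
    show "good n x (L[c := Suc k]) (Suc k)" using st by simp
    show "Suc k \<le> j" using kj by simp
    show "L[c := Suc k] ! a = j" "L[c := Suc k] ! b = Suc j" using ac Suc by auto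
  qed (use Suc in auto)
  then obtain L' k' where L': "good n x L' k'" "((PE, L[c := Suc k]), (PE, L')) \<in> Q"
    "card (invs n x L') < card (invs n x (L[c := Suc k]))" by blast
  have "((PE, L), (PE, L')) \<in> Q" using st L'(2) by (meson rtrancl_trans)
  then show ?case using L' sub by (meson order_less_le_trans)
qed

lemma down_reduce:
  assumes "good n x L k" "Suc j \<le> k" "a < n" "b < n" "L!a = j" "L!b = Suc j"
    "key n x b < key n x a"
  shows "\<exists>L' k'. good n x L' k' \<and> ((PE, L), (PE, L')) \<in> Q \<and> card (invs n x L') < card (invs n x L)"
  using assms
proof (induction "k - Suc j" arbitrary: L k)
  case 0
  then have kj: "k = Suc j" by simp
  obtain c where c: "c \<in> G L k" "\<forall>d\<in>G L k. key n x c \<le> key n x d"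
    using exists_min_key[OF fin_G good_nonempty[OF 0(2)], of k n x] 0(2) by (auto simp: good_def)
  have cc: "c < n" "L!c = Suc j" using c kj by auto
  have g: "good n x L (Suc j)" using 0 kj by simp
  have mn: "\<forall>d\<in>G L (Suc j). key n x c \<le> key n x d" using c kj by simp
  have st: "good n x (L[c := j]) j \<and> ((PE, L), (PE, L[c := j])) \<in> Q"
    by (rule step_down[OF g cc mn])
  have len: "length L = n" using 0(2) by (simp add: good_def)
  have "key n x c \<le> key n x b" using c(2) 0 kj by auto
  then have "\<exists>b<n. L!b = j \<and> key n x c < key n x b" using 0 kj by auto
  then have "card (invs n x (L[c := j])) < card (invs n x L)"
    by (rule invs_down(2)[OF len cc mn])
  then show ?case using st by blast
next
  case (Suc d)
  then have kj: "Suc j < k" by simp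
  then obtain k0 where k0: "k = Suc k0" by (cases k) auto
  obtain c where c: "c \<in> G L k" "\<forall>d\<in>G L k. key n x c \<le> key n x d"
    using exists_min_key[OF fin_G good_nonempty[OF Suc(3)], of k n x] Suc(3) by (auto simp: good_def)
  have cc: "c < n" "L!c = Suc k0" using c k0 by auto
  have g: "good n x L (Suc k0)" using Suc k0 by simp
  have mn: "\<forall>d\<in>G L (Suc k0). key n x c \<le> key n x d" using c k0 by simp
  have st: "good n x (L[c := k0]) k0 \<and> ((PE, L), (PE, L[c := k0])) \<in> Q"
    by (rule step_down[OF g cc mn])
  have len: "length L = n" using Suc(3) by (simp add: good_def)
  have sub: "card (invs n x (L[c := k0])) \<le> card (invs n x L)"
    by (rule card_mono[OF invs_fin invs_down(1)[OF len cc mn]])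
  have ac: "a \<noteq> c" "b \<noteq> c" using Suc kj cc k0 by auto
  have "\<exists>L' k'. good n x L' k' \<and> ((PE, L[c := k0]), (PE, L')) \<in> Q \<and>
          card (invs n x L') < card (invs n x (L[c := k0]))"
  proof (rule Suc(1))
    show "d = k0 - Suc j" using Suc(2) k0 by simp
    show "good n x (L[c := k0]) k0" using st by simp
    show "Suc j \<le> k0" using kj k0 by simp
    show "L[c := k0] ! a = j" "L[c := k0] ! b = Suc j" using ac Suc by auto
  qed (use Suc in auto)
  then obtain L' k' where L': "good n x L' k'" "((PE, L[c := k0]), (PE, L')) \<in> Q"
    "card (invs n x L') < card (invs n x (L[c := k0]))" by blast
  have "((PE, L), (PE, L')) \<in> Q" using st L'(2) by (meson rtrancl_trans)
  then show ?case using L' sub by (meson order_less_le_trans)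
qed

lemma adj_inv:
  assumes g: "good n x L k" and ne: "invs n x L \<noteq> {}"
  shows "\<exists>j a b. j < m \<and> a < n \<and> b < n \<and> L!a = j \<and> L!b = Suc j \<and> key n x b < key n x a"
proof -
  have bnd: "\<forall>i<n. L!i \<le> m" using g by (simp add: good_def)
  have "\<forall>a b. a < n \<longrightarrow> b < n \<longrightarrow> L!a < L!b \<longrightarrow> key n x b < key n x a \<longrightarrow> L!b - L!a = d \<longrightarrow>
        (\<exists>j a b. j < m \<and> a < n \<and> b < n \<and> L!a = j \<and> L!b = Suc j \<and> key n x b < key n x a)" for d
  proof (induction d rule: less_induct)
    case (less d)
    show ?case
    proof (intro allI impI)
      fix a b assume h: "a < n" "b < n" "L!a < L!b" "key n x b < key n x a" "L!b - L!a = d"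
      show "\<exists>j a b. j < m \<and> a < n \<and> b < n \<and> L!a = j \<and> L!b = Suc j \<and> key n x b < key n x a"
      proof (cases "L!b = Suc (L!a)")
        case True
        then show ?thesis using h bnd by (intro exI[of _ "L!a"] exI[of _ a] exI[of _ b]) force
      next
        case False
        then have lt: "Suc (L!a) < L!b" using h by simp
        then have "Suc (L!a) \<le> m" using bnd h by force
        then obtain c where c: "c < n" "L!c = Suc (L!a)"
          using good_nonempty[OF g, of "Suc (L!a)"] by auto
        have cb: "c \<noteq> b" using c lt by auto
        then have "key n x c \<noteq> key n x b" using key_inj c h by blast
        then consider "key n x b < key n x c" | "key n x c < key n x b" by linarith
        then show ?thesis
        proof cases
          case 1
          have "L!b - L!c < d" using h c lt by simp
          then show ?thesis using less.IH[of "L!b - L!c"] c h lt 1 by auto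
        next
          case 2
          have "L!c - L!a < d" using h c lt by simp
          moreover have "key n x c < key n x a" using 2 h by simp
          ultimately show ?thesis using less.IH[of "L!c - L!a"] c h lt by auto
        qed
      qed
    qed
  qed
  moreover obtain a b where "(a, b) \<in> invs n x L" using ne by auto
  ultimately show ?thesis unfolding invs_def by blast
qed

lemma to_zero:
  assumes "good n x L k" "invs n x L = {}"
  shows "\<exists>L'. good n x L' 0 \<and> invs n x L' = {} \<and> ((PE, L), (PE, L')) \<in> Q"
  using assms
proof (induction k arbitrary: L)
  case 0 then show ?case by blast
next
  case (Suc k)
  obtain c where c: "c \<in> G L (Suc k)" "\<forall>d\<in>G L (Suc k). key n x c \<le> key n x d"
    using exists_min_key[OF fin_G good_nonempty[OF Suc(2)], of "Suc k" n x] Suc(2) by (auto simp: good_def)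
  have cc: "c < n" "L!c = Suc k" using c by auto
  have st: "good n x (L[c := k]) k \<and> ((PE, L), (PE, L[c := k])) \<in> Q"
    by (rule step_down[OF Suc(2) cc c(2)])
  have len: "length L = n" using Suc(2) by (simp add: good_def)
  have "invs n x (L[c := k]) = {}" using invs_down(1)[OF len cc c(2)] Suc(3) by blast
  then obtain L' where L': "good n x L' 0" "invs n x L' = {}" "((PE, L[c := k]), (PE, L')) \<in> Q"
    using Suc(1) st by blast
  then show ?case using st by (meson rtrancl_trans)
qed

lemma to_canon:
  assumes "good n x L k"
  shows "\<exists>L'. good n x L' 0 \<and> invs n x L' = {} \<and> ((PE, L), (PE, L')) \<in> Q"
  using assms
proof (induction "card (invs n x L)" arbitrary: L k rule: less_induct)
  case less
  show ?case
  proof (cases "invs n x L = {}")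
    case True then show ?thesis using to_zero[OF less(2)] by blast
  next
    case False
    obtain j a b where jab: "j < m" "a < n" "b < n" "L!a = j" "L!b = Suc j" "key n x b < key n x a"
      using adj_inv[OF less(2) False] by blast
    have "\<exists>L' k'. good n x L' k' \<and> ((PE, L), (PE, L')) \<in> Q \<and> card (invs n x L') < card (invs n x L)"
    proof (cases "k \<le> j")
      case True then show ?thesis using up_reduce[OF less(2) True jab] by blast
    next
      case False then show ?thesis using down_reduce[OF less(2) _ jab(2-6)] by simp
    qed
    then obtain L1 k1 where L1: "good n x L1 k1" "((PE, L), (PE, L1)) \<in> Q"
      "card (invs n x L1) < card (invs n x L)" by blast
    then obtain L' where "good n x L' 0" "invs n x L' = {}" "((PE, L1), (PE, L')) \<in> Q"
      using less(1) by blast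
    then show ?thesis using L1 by (meson rtrancl_trans)
  qed
qed

end


definition cum :: "nat \<Rightarrow> nat list \<Rightarrow> nat \<Rightarrow> nat" where
  "cum n L j = card {i. i < n \<and> L!i < j}"

definition rnk :: "nat \<Rightarrow> (nat \<Rightarrow> int) \<Rightarrow> nat \<Rightarrow> nat" where
  "rnk n x l = card {i. i < n \<and> key n x i < key n x l}"

context cs
begin

lemma cum_Suc: "cum n L (Suc j) = cum n L j + card (G L j)"
proof -
  have e: "{i. i < n \<and> L!i < Suc j} = {i. i < n \<and> L!i < j} \<union> G L j" by auto
  show ?thesis unfolding cum_def e by (rule card_Un_disjoint) auto
qed

lemma cum_mono: "j \<le> j' \<Longrightarrow> cum n L j \<le> cum n L j'"
  unfolding cum_def by (rule card_mono) auto

lemma cum_eq: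
  assumes "good n x L1 0" "good n x L2 0" "j \<le> Suc m"
  shows "cum n L1 j = cum n L2 j"
  using assms(3)
proof (induction j)
  case 0 then show ?case by (simp add: cum_def)
next
  case (Suc j)
  then have j: "j \<le> m" by simp
  show ?case using Suc good_cnt[OF assms(1) j] good_cnt[OF assms(2) j] cum_Suc by simp
qed

lemma rank_bounds:
  assumes g: "good n x L k" and inv: "invs n x L = {}" and l: "l < n"
  shows "cum n L (L!l) \<le> rnk n x l" and "rnk n x l < cum n L (Suc (L!l))"
proof -
  have "{i. i < n \<and> L!i < L!l} \<subseteq> {i. i < n \<and> key n x i < key n x l}"
  proof
    fix i assume i: "i \<in> {i. i < n \<and> L!i < L!l}"
    then have "i \<noteq> l" by auto
    then have "key n x i \<noteq> key n x l" using key_inj i l by blast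
    moreover have "\<not> key n x l < key n x i" using inv i l unfolding invs_def by blast
    ultimately show "i \<in> {i. i < n \<and> key n x i < key n x l}" using i by auto
  qed
  then show "cum n L (L!l) \<le> rnk n x l" unfolding cum_def rnk_def by (rule card_mono[rotated]) auto
  have "{i. i < n \<and> key n x i < key n x l} \<subset> {i. i < n \<and> L!i < Suc (L!l)}"
  proof
    show "{i. i < n \<and> key n x i < key n x l} \<subseteq> {i. i < n \<and> L!i < Suc (L!l)}"
    proof
      fix i assume i: "i \<in> {i. i < n \<and> key n x i < key n x l}"
      have "\<not> L!l < L!i" using inv i l unfolding invs_def by blast
      then show "i \<in> {i. i < n \<and> L!i < Suc (L!l)}" using i by auto
    qed
    show "{i. i < n \<and> key n x i < key n x l} \<noteq> {i. i < n \<and> L!i < Suc (L!l)}"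
      using l by blast
  qed
  then show "rnk n x l < cum n L (Suc (L!l))" unfolding cum_def rnk_def
    by (rule psubset_card_mono[rotated]) auto
qed

lemma canon_uniq:
  assumes g1: "good n x L1 0" and g2: "good n x L2 0"
    and i1: "invs n x L1 = {}" and i2: "invs n x L2 = {}"
  shows "L1 = L2"
proof (rule nth_equalityI)
  show "length L1 = length L2" using g1 g2 by (simp add: good_def)
  fix l assume "l < length L1"
  then have l: "l < n" using g1 by (simp add: good_def)
  have b1: "L1!l \<le> m" and b2: "L2!l \<le> m" using g1 g2 l by (auto simp: good_def)
  have "\<not> L1!l < L2!l"
  proof
    assume lt: "L1!l < L2!l"
    have "rnk n x l < cum n L1 (Suc (L1!l))" by (rule rank_bounds(2)[OF g1 i1 l])
    also have "\<dots> = cum n L2 (Suc (L1!l))" using cum_eq[OF g1 g2] b1 by simp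
    also have "\<dots> \<le> cum n L2 (L2!l)" using lt by (intro cum_mono) simp
    also have "\<dots> \<le> rnk n x l" by (rule rank_bounds(1)[OF g2 i2 l])
    finally show False by simp
  qed
  moreover have "\<not> L2!l < L1!l"
  proof
    assume lt: "L2!l < L1!l"
    have "rnk n x l < cum n L2 (Suc (L2!l))" by (rule rank_bounds(2)[OF g2 i2 l])
    also have "\<dots> = cum n L1 (Suc (L2!l))" using cum_eq[OF g1 g2] b2 by simp
    also have "\<dots> \<le> cum n L1 (L1!l)" using lt by (intro cum_mono) simp
    also have "\<dots> \<le> rnk n x l" by (rule rank_bounds(1)[OF g1 i1 l])
    finally show False by simp
  qed
  ultimately show "L1!l = L2!l" by simp
qed

end


context cs
begin

lemma id_inj: "inj_on (\<lambda>i::nat. i) {..N}" by (simp add: inj_on_def)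

lemma chain_good:
  assumes cc: "chain_cover n x C"
  shows "\<exists>k. C = (PE, snd C) \<and> good n x (snd C) k"
proof -
  obtain E L where C: "C = (E, L)" by (cases C)
  have nt: "ntype n {..<n-3} (E, L)" and vt: "\<exists>u<n-3. val (E, L) u = 4 \<and> (\<forall>w<n-3. w \<noteq> u \<longrightarrow> val (E, L) w = 3)"
    and fl: "\<forall>a b. {a, b} \<in> E \<and> a < b \<longrightarrow> flow x (E, L) a b > 0"
    and ch: "\<forall>i<n-3. \<forall>j<n-3. {i, j} \<in> E \<longleftrightarrow> (i + 1 = j \<or> j + 1 = i)"
    using cc unfolding C chain_cover_def vertex_type_cover_def fst_conv by blast+
  have tr: "is_tree {..<n-3} E" and len: "length L = n" and lb: "\<forall>i<n. L!i \<in> {..<n-3}"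
    using nt unfolding ntype_def snd_conv fst_conv by blast+
  have ed: "\<forall>e\<in>E. \<exists>a b. e = {a, b} \<and> a \<noteq> b \<and> a \<in> {..<n-3} \<and> b \<in> {..<n-3}"
    using tr unfolding is_tree_def by blast
  have EPE: "E = PE"
  proof
    show "E \<subseteq> PE"
    proof
      fix e assume e: "e \<in> E"
      then obtain a b where ab: "e = {a, b}" "a < n-3" "b < n-3" using ed by auto
      then have "a + 1 = b \<or> b + 1 = a" using ch e by blast
      then show "e \<in> PE"
      proof
        assume h: "a + 1 = b" then show ?thesis using ab unfolding PEw_def by (intro image_eqI[of _ _ a]) auto
      next
        assume h: "b + 1 = a"
        then have "e = {b, Suc b}" using ab by auto
        then show ?thesis using ab h unfolding PEw_def by (intro image_eqI[of _ _ b]) auto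
      qed
    qed
    show "PE \<subseteq> E"
    proof
      fix e assume "e \<in> PE"
      then obtain i where i: "i < m" "e = {i, Suc i}" unfolding PEw_def by auto
      then show "e \<in> E" using ch by simp
    qed
  qed
  obtain k where k: "k < n-3" "val (E, L) k = 4" "\<forall>w<n-3. w \<noteq> k \<longrightarrow> val (E, L) w = 3"
    using vt by blast
  have m1: "1 \<le> m" using n5 by simp
  have good: "good n x L k"
    unfolding good_def
  proof (intro conjI allI impI)
    show "length L = n" by (rule len)
    show "\<And>i. i < n \<Longrightarrow> L ! i \<le> m" using lb by auto
    show "k \<le> m" using k by simp
    fix j
    show "j \<le> m \<Longrightarrow> cnt n L j = base m j + (if j = k then 1 else 0)"
    proof -
      assume j: "j \<le> m"
      have ec: "card {e \<in> E. j \<in> e} = (if 0 < j then 1 else 0) + (if j < m then 1 else 0)"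
        using ecount_path[OF id_inj j] EPE by simp
      have v: "val (E, L) j = (if j = k then 4 else 3)" using k j by auto
      have "val (E, L) j = card {e \<in> E. j \<in> e} + cnt n L j"
        unfolding val_def cnt_def using len by simp
      then show ?thesis using ec v m1 j unfolding base_def by (auto split: if_splits)
    qed
    show "1 \<le> j \<and> j \<le> m \<Longrightarrow> 0 < Ssum n x L j"
    proof -
      assume j: "1 \<le> j \<and> j \<le> m"
      have q: "\<forall>l<length L. L!l \<le> m \<and> L!l = L!l" using lb len by auto
      have jm: "j - 1 < m" using j by arith
      have "{j - 1, j} \<in> E" using j EPE unfolding PEw_def
        by (auto intro!: image_eqI[of _ _ "j - 1"])
      then have "flow x (E, L) (j - 1) j > 0" using fl j by auto
      moreover have "flow x (PE, L) (j - 1) (Suc (j - 1)) = Ssum n x L j"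
        using flow_path(1)[of "\<lambda>i. i" m "j - 1" L "\<lambda>l. L!l" n x, OF id_inj jm q len x0] j
        unfolding Ssum_def by simp
      ultimately show ?thesis using EPE j by simp
    qed
  qed
  show ?thesis using C EPE good by auto
qed

end



theorem lemma3p5:
  fixes n :: nat and x :: "nat \<Rightarrow> int" and p :: "nat \<Rightarrow> real"
  assumes "n \<ge> 5"
    and "in_Hn n x"
    and "\<forall>i j. i < j \<and> j \<le> n - 4 \<longrightarrow> p i < p j"
    and "chain_cover n x C" and "chain_cover n x C'"
  shows "(C, C') \<in> (hur_edge n x p \<union> (hur_edge n x p)\<inverse>)\<^sup>*"
proof -
  interpret cs n x p
    using assms(1-3) unfolding in_Hn_def by unfold_locales auto
  obtain k where k: "C = (PE, snd C)" "good n x (snd C) k" using chain_good[OF assms(4)] by blast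
  obtain k' where k': "C' = (PE, snd C')" "good n x (snd C') k'" using chain_good[OF assms(5)] by blast
  obtain L0 where L0: "good n x L0 0" "invs n x L0 = {}" "((PE, snd C), (PE, L0)) \<in> Q"
    using to_canon[OF k(2)] by blast
  obtain L1 where L1: "good n x L1 0" "invs n x L1 = {}" "((PE, snd C'), (PE, L1)) \<in> Q"
    using to_canon[OF k'(2)] by blast
  have "L0 = L1" by (rule canon_uniq[OF L0(1) L1(1) L0(2) L1(2)])
  then have "((PE, L0), (PE, snd C')) \<in> Q" using conn_sym[OF L1(3)] by simp
  then have "((PE, snd C), (PE, snd C')) \<in> Q" using L0(3) by (meson rtrancl_trans)
  then show ?thesis using k k' by simp
qed


end
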